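(* For every real $n\ge2$, \[ \max_{a\in[0,1]}\Bigl((n-1)e^{\frac{1-a^2}{n}}+e^{\frac{1-(n(1-a)+a)^2}{n}}\Bigr)\le n. \] *)

theory Defs
  imports "HOL-Analysis.Analysis"
begin

end

theory Submission
  imports Defs
begin

lemma ln_lower_pade:
  fixes x :: real
  assumes x: "x \<ge> 0"
  shows "2 * x / (2 + x) \<le> ln (1 + x)"
proof -
  let ?k = "\<lambda>t::real. ln (1 + t) - 2 * t / (2 + t)"
  have "?k 0 \<le> ?k x"
  proof (rule DERIV_nonneg_imp_nondecreasing[OF x])
    fix t :: real assume t: "0 \<le> t" "t \<le> x"
    have d: "(?k has_real_derivative (1 / (1 + t) - (2 * (2 + t) - 2 * t) / (2 + t)^2)) (at t)"
      using t by (auto intro!: derivative_eq_intros simp: power2_eq_square)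
    have "1 / (1 + t) - (2 * (2 + t) - 2 * t) / (2 + t)^2 = t^2 / ((1 + t) * (2 + t)^2)"
      proof -
      have h1: "1 + t > 0" "2 + t > 0" using t by auto
      show ?thesis using h1 by (simp add: divide_simps power2_eq_square) (simp add: algebra_simps)
    qed
    also have "\<dots> \<ge> 0" using t by simp
    finally show "\<exists>y. (?k has_real_derivative y) (at t) \<and> 0 \<le> y" using d by auto
  qed
  then show ?thesis by simp
qed

theorem proposition3p2:
  fixes n :: real
  assumes "n \<ge> 2"
  shows "\<forall>a\<in>{0..1::real}. (n - 1) * exp ((1 - a^2) / n) + exp ((1 - (n * (1 - a) + a)^2) / n) \<le> n"
proof -
  define G where "G = (\<lambda>a::real. (n - 1) * exp ((1 - a^2) / n) + exp ((1 - (n * (1 - a) + a)^2) / n))"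
  define G' where "G' = (\<lambda>a::real. (n - 1) * exp ((1 - a^2) / n) * (- (2 * a) / n)
       + exp ((1 - (n * (1 - a) + a)^2) / n) * (2 * (n * (1 - a) + a) * (n - 1) / n))"
  have npos: "n > 0" using assms by simp
  have der: "(G has_real_derivative G' a) (at a)" for a
    unfolding G_def G'_def using npos
    by (auto intro!: derivative_eq_intros simp: field_simps power2_eq_square)
  have cont: "continuous_on {0..1} G"
    unfolding G_def by (intro continuous_intros) (use npos in auto)
  obtain a0 where a0: "a0 \<in> {0..1}" and amax: "\<forall>y\<in>{0..1}. G y \<le> G a0"
    using continuous_attains_sup[of "{0..1::real}" G] cont by auto
  have "G a0 \<le> n"
  proof (cases "a0 = 1")
    case True then show ?thesis unfolding G_def by simp
  next
    case ne1: False
    show ?thesis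
    proof (cases "a0 = 0")
      case True
      have "G' 0 > 0" unfolding G'_def using npos assms by simp
      then obtain d where d: "d > 0" "\<forall>h>0. h < d \<longrightarrow> G 0 < G (0 + h)"
        using DERIV_pos_inc_right[OF der] by blast
      define h where "h = min (d/2) 1"
      have "G 0 < G h" using d unfolding h_def by auto
      moreover have "h \<in> {0..1}" unfolding h_def using d by auto
      ultimately show ?thesis using amax True by fastforce
    next
      case ne0: False
      with a0 ne1 have a01: "0 < a0" "a0 < 1" by auto
      have "G' a0 = 0"
      proof (rule DERIV_local_max[OF der, of "min a0 (1 - a0)"])
        show "0 < min a0 (1 - a0)" using a01 by simp
        show "\<forall>y. \<bar>a0 - y\<bar> < min a0 (1 - a0) \<longrightarrow> G y \<le> G a0"
          using amax by (auto simp: abs_if split: if_splits)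
      qed
      define a where "a = a0"
      define c where "c = n * (1 - a) + a"
      define EU where "EU = exp ((1 - a^2) / n)"
      define EV where "EV = exp ((1 - c^2) / n)"
      have a1: "0 < a" "a < 1" using a01 unfolding a_def by auto
      have "2 * (1 - a) \<le> n * (1 - a)" using assms a1 by (intro mult_right_mono) auto
      then have cpos: "c \<ge> 1" unfolding c_def using a1 by (smt (verit))
      have EUp: "EU > 0" unfolding EU_def by simp
      have crit: "a * EU = c * EV"
      proof -
        have "(n - 1) / n * 2 * (c * EV - a * EU) = 0"
          using \<open>G' a0 = 0\<close> unfolding G'_def a_def[symmetric] c_def[symmetric] EU_def[symmetric] EV_def[symmetric]
          by (simp add: field_simps) (metis disj_commute)
        then show ?thesis using assms by simp
      qed
      have Ga: "G a0 = (n - 1) * EU + EV"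
        unfolding G_def a_def[symmetric] c_def[symmetric] EU_def[symmetric] EV_def[symmetric] by simp
      define s where "s = (n - 1) * c + a"
      define x where "x = (c - a) / s"
      have "(n - 1) * c > 0" using cpos assms by (intro mult_pos_pos) auto
      then have spos: "s > 0" unfolding s_def using a1 by linarith
      have cma: "c - a = n * (1 - a)" unfolding c_def by simp
      have xnn: "x \<ge> 0" unfolding x_def using spos cma a1 npos by simp
      have x1: "1 + x = n * c / s" unfolding x_def s_def using spos unfolding s_def
        by (simp add: field_simps)
      have poly: "(1 + a) * ((2 * n - 1) * c + a) \<le> 2 * n^2"
      proof -
        define m where "m = n - 1"
        define b where "b = 1 - a"
        have "(1 + a) * ((2 * n - 1) * c + a) - 2 * n^2
              = - n * (((2*m-1)*b - 2*(m-1))^2 + 2*(m-1)) / (2*m-1)"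
          unfolding m_def b_def c_def using assms by (simp add: field_simps power2_eq_square)
        also have "\<dots> \<le> 0" unfolding m_def b_def using assms a1
          by (intro divide_nonpos_pos mult_nonpos_nonneg add_nonneg_nonneg) auto
        finally show ?thesis by simp
      qed
      have Ule: "(1 - a^2) / n \<le> 2 * x / (2 + x)"
      proof -
        have "(2 * n - 1) * c > 0" using cpos assms by (intro mult_pos_pos) auto
        then have dpos0: "(2 * n - 1) * c + a > 0" using a1 by linarith
        have sx: "2 + x = ((2 * n - 1) * c + a) / s"
          unfolding x_def using spos by (simp add: field_simps s_def)
        have "2 * x / (2 + x) = 2 * (c - a) / ((2 * n - 1) * c + a)"
        proof -
          have "2 * x / (2 + x) = (2 * (c - a) / s) / (((2 * n - 1) * c + a) / s)"
            unfolding sx unfolding x_def by simp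
          also have "\<dots> = 2 * (c - a) / ((2 * n - 1) * c + a)"
            using spos by (simp add: divide_divide_times_eq)
          finally show ?thesis .
        qed
        also have "\<dots> = 2 * n * (1 - a) / ((2 * n - 1) * c + a)" using cma by simp
        finally have eq: "2 * x / (2 + x) = 2 * n * (1 - a) / ((2 * n - 1) * c + a)" .
        have "(2 * n - 1) * c > 0" using cpos assms by (intro mult_pos_pos) auto
        then have dpos: "(2 * n - 1) * c + a > 0" using a1 by linarith
        have "(1 - a^2) * ((2 * n - 1) * c + a) \<le> 2 * n * (1 - a) * n"
        proof -
          have "(1 - a^2) * ((2 * n - 1) * c + a) = (1 - a) * ((1 + a) * ((2 * n - 1) * c + a))"
            by (simp add: algebra_simps power2_eq_square)
          also have "\<dots> \<le> (1 - a) * (2 * n^2)" using poly a1 by (intro mult_left_mono) auto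
          finally show ?thesis by (simp add: power2_eq_square algebra_simps)
        qed
        then show ?thesis unfolding eq using dpos npos by (simp add: field_simps)
      qed
      have "EU \<le> 1 + x"
      proof -
        have "EU \<le> exp (2 * x / (2 + x))" unfolding EU_def using Ule by simp
        also have "\<dots> \<le> exp (ln (1 + x))" using ln_lower_pade[OF xnn] by simp
        also have "\<dots> = 1 + x" using xnn by simp
        finally show ?thesis .
      qed
      then have "EU * s \<le> n * c" using x1 spos by (simp add: field_simps)
      have "G a0 * c = EU * s" unfolding Ga s_def using crit by (simp add: algebra_simps)
      then have "G a0 * c \<le> n * c" using \<open>EU * s \<le> n * c\<close> by simp
      then show ?thesis using cpos by simp
    qed
  qed
  then show ?thesis using amax unfolding G_def by auto
qed

end
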